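(* Let $P_0=P_0(q)=\sum_{j\ge1}(-1)^{j-1}(2j-1)q^{j(j-1)/2}$ and let $\Theta=q\frac{d}{dq}$. For every $m\ge1$, \[\Theta^m(P_0)=-3P_0P_m,\] where $P_m$ is a polynomial in $A_0,A_1,\dots,A_{m-1}$ with rational coefficients. Moreover $P_1=A_0$ and $P_{m+1}=\Theta(P_m)-3A_0P_m$ for $m\ge1$.
   Context: For $m\ge1$ let $\sigma(m)$ be the sum of positive divisors of $m$, and $A_i=A_i(q)=\sum_{m\ge1}m^i\sigma(m)q^m$ for $i\ge0$ (so $\Theta(A_i)=A_{i+1}$). Everything is regarded as power series in $q$ (equivalently, functions of $0<q<1$). *)

theory Defs
  imports "HOL-Computational_Algebra.Formal_Power_Series"
begin

definition sigma :: "nat \<Rightarrow> nat" where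
  "sigma m = (\<Sum>d\<in>{d. d dvd m}. d)"

definition A :: "nat \<Rightarrow> rat fps" where
  "A i = Abs_fps (\<lambda>m. if m = 0 then 0 else of_nat m ^ i * of_nat (sigma m))"

text \<open>Coefficient of q^n in P_0: (-1)^(j-1)(2j-1) if n = j(j-1)/2 with j >= 1
  (such j is unique and satisfies j <= n+1), else 0.\<close>
definition P0 :: "rat fps" where
  "P0 = Abs_fps (\<lambda>n. \<Sum>j\<in>{1..n+1}.
          if j * (j - 1) div 2 = n then (-1) ^ (j - 1) * of_nat (2 * j - 1) else 0)"

abbreviation Theta :: "rat fps \<Rightarrow> rat fps" where
  "Theta \<equiv> fps_XD"

inductive_set poly_in_A :: "nat \<Rightarrow> rat fps set" for m :: nat where
  const: "fps_const c \<in> poly_in_A m"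
| gen: "i < m \<Longrightarrow> A i \<in> poly_in_A m"
| add: "f \<in> poly_in_A m \<Longrightarrow> g \<in> poly_in_A m \<Longrightarrow> f + g \<in> poly_in_A m"
| mult: "f \<in> poly_in_A m \<Longrightarrow> g \<in> poly_in_A m \<Longrightarrow> f * g \<in> poly_in_A m"

end

theory Submission
  imports Defs "HOL-Computational_Algebra.Polynomial"
begin

unbundle fps_syntax


fun qbin :: "'a::comm_ring_1 \<Rightarrow> nat \<Rightarrow> nat \<Rightarrow> 'a" where
  "qbin q 0 k = (if k = 0 then 1 else 0)"
| "qbin q (Suc m) 0 = 1"
| "qbin q (Suc m) (Suc k) = qbin q m k + q ^ Suc k * qbin q m (Suc k)"

fun tri :: "nat \<Rightarrow> nat" where
  "tri 0 = 0"
| "tri (Suc j) = tri j + j"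

lemma tri_add: "tri (a + b) = tri a + tri b + a * b"
  by (induction b) auto

lemma tri_double: "2 * tri j + j = j * j"
  by (induction j) auto

lemma qbin_zero: "m < k \<Longrightarrow> qbin q m k = 0"
proof (induction m arbitrary: k)
  case 0 then show ?case by simp
next
  case (Suc m)
  then obtain k' where "k = Suc k'" by (cases k) auto
  with Suc show ?case by simp
qed

lemma qbin_0_right [simp]: "qbin q m 0 = 1"
  by (cases m) auto

lemma qbin_thm:
  fixes a b q :: "'a::comm_ring_1"
  shows "(\<Prod>j<m. a + b * q ^ j) = (\<Sum>k\<le>m. q ^ tri k * qbin q m k * b ^ k * a ^ (m - k))"
proof (induction m arbitrary: b)
  case 0 then show ?case by simp
next
  case (Suc m)
  have IH: "(\<Prod>j<m. a + (b*q) * q ^ j) = (\<Sum>k\<le>m. q ^ tri k * qbin q m k * (b*q) ^ k * a ^ (m - k))"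
    by (rule Suc.IH)
  have L: "(\<Prod>j<Suc m. a + b * q ^ j) = (a + b) * (\<Prod>j<m. a + (b*q) * q ^ j)"
    by (subst prod.lessThan_Suc_shift) (simp add: mult.assoc del: prod.lessThan_Suc)
  define S1 where "S1 = (\<Sum>k\<le>m. q ^ tri (Suc k) * qbin q m k * b ^ Suc k * a ^ (m - k))"
  define S2 where "S2 = (\<Sum>k\<le>m. q ^ tri (Suc k) * (q ^ Suc k * qbin q m (Suc k)) * b ^ Suc k * a ^ (m - k))"
  have R: "(\<Sum>k\<le>Suc m. q ^ tri k * qbin q (Suc m) k * b ^ k * a ^ (Suc m - k)) = a ^ Suc m + S1 + S2"
    unfolding S1_def S2_def sum.atMost_Suc_shift
    by (simp add: algebra_simps sum.distrib del: power_Suc sum.atMost_Suc)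
  have B: "b * (\<Sum>k\<le>m. q ^ tri k * qbin q m k * (b*q) ^ k * a ^ (m - k)) = S1"
    unfolding S1_def sum_distrib_left
    by (rule sum.cong) (simp_all add: power_add power_mult_distrib algebra_simps)
  define g where "g k = q ^ (tri k + k) * qbin q m k * b ^ k * a ^ (Suc m - k)" for k
  have A1: "a * (\<Sum>k\<le>m. q ^ tri k * qbin q m k * (b*q) ^ k * a ^ (m - k)) = (\<Sum>k\<le>m. g k)"
    unfolding g_def sum_distrib_left
    by (rule sum.cong) (simp_all add: power_add power_mult_distrib algebra_simps Suc_diff_le)
  also have "\<dots> = (\<Sum>k\<le>Suc m. g k)" by (simp add: g_def qbin_zero)
  also have "\<dots> = a ^ Suc m + S2"
    unfolding S2_def g_def sum.atMost_Suc_shift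
    by (simp add: power_add mult_ac del: sum.atMost_Suc)
  finally have A: "a * (\<Sum>k\<le>m. q ^ tri k * qbin q m k * (b*q) ^ k * a ^ (m - k)) = a ^ Suc m + S2" .
  show ?case unfolding L IH R using A B by (simp add: algebra_simps)
qed



fun qpoch :: "'a::comm_ring_1 \<Rightarrow> nat \<Rightarrow> 'a" where
  "qpoch q 0 = 1"
| "qpoch q (Suc n) = qpoch q n * (1 - q ^ Suc n)"

lemma qbin_fact: "k \<le> m \<Longrightarrow> qbin q m k * qpoch q k * qpoch q (m - k) = qpoch q m"
proof (induction m arbitrary: k)
  case 0 then show ?case by simp
next
  case (Suc m)
  show ?case
  proof (cases k)
    case 0 then show ?thesis by simp
  next
    case (Suc k')
    show ?thesis
    proof (cases "k' = m")
      case True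
      have "qbin q m m * qpoch q m * qpoch q (m - m) = qpoch q m" using Suc.IH[of m] by simp
      then show ?thesis using Suc True by (simp add: qbin_zero algebra_simps)
    next
      case False
      with Suc Suc.prems have lt: "k' < m" by simp
      have I1: "qbin q m k' * qpoch q k' * qpoch q (m - k') = qpoch q m" using Suc.IH lt by simp
      have I2: "qbin q m (Suc k') * qpoch q (Suc k') * qpoch q (m - Suc k') = qpoch q m"
        using Suc.IH[of "Suc k'"] lt by (simp del: qpoch.simps)
      have md: "m - k' = Suc (m - Suc k')" using lt by simp
      have e: "q ^ Suc k' * q ^ Suc (m - Suc k') = q ^ Suc m"
      proof -
        have "Suc k' + Suc (m - Suc k') = Suc m" using lt by simp
        then show ?thesis by (metis power_add)
      qed
      have "qbin q (Suc m) k * qpoch q k * qpoch q (Suc m - k)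
          = qbin q m k' * qpoch q k' * qpoch q (m - k') * (1 - q ^ Suc k')
            + q ^ Suc k' * (qbin q m (Suc k') * qpoch q (Suc k') * qpoch q (m - Suc k')) * (1 - q ^ Suc (m - Suc k'))"
        using Suc md by (simp add: algebra_simps)
      also have "\<dots> = qpoch q m * (1 - q ^ Suc k') + q ^ Suc k' * qpoch q m * (1 - q ^ Suc (m - Suc k'))"
        using I1 I2 by simp
      also have "\<dots> = qpoch q m * (1 - q ^ Suc k' * q ^ Suc (m - Suc k'))"
        by (simp add: algebra_simps)
      also have "\<dots> = qpoch q (Suc m)" using e by simp
      finally show ?thesis .
    qed
  qed
qed

lemma prod_lessThan_add: fixes b :: nat shows "(\<Prod>j<a + b. f j) = (\<Prod>j<a. f j) * (\<Prod>i<b. f (a + i))"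
  by (induction b) (simp_all add: mult.assoc)

lemma sum_lessThan_add: fixes b :: nat shows "(\<Sum>j<a + b. f j) = (\<Sum>j<a. f j) + (\<Sum>i<b. f (a + i))"
  by (induction b) (simp_all add: add.assoc)

lemma qbin_const: "qbin [:c:] m k = [:qbin c m k:]"
  by (induction c m k rule: qbin.induct) (simp_all add: poly_const_pow)

lemma prod_low: "(\<Prod>j<n. q ^ n - q ^ j) = (-1) ^ n * q ^ tri n * qpoch (q::'a::comm_ring_1) n"
proof -
  have a: "(\<Prod>j<n. q ^ n - q ^ j) = (\<Prod>j<n. (-1) * q ^ j * (1 - q ^ (n - j)))"
    by (rule prod.cong) (simp_all add: algebra_simps power_add[symmetric])
  have b: "(\<Prod>j<n. q ^ j) = q ^ tri n" by (induction n) (simp_all add: power_add)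
  have c: "(\<Prod>j<n. (1 - q ^ (n - j))) = qpoch q n"
  proof (induction n)
    case 0 then show ?case by simp
  next
    case (Suc n)
    have "(\<Prod>j<Suc n. (1 - q ^ (Suc n - j))) = (1 - q ^ Suc n) * (\<Prod>j<n. (1 - q ^ (Suc n - Suc j)))"
      by (subst prod.lessThan_Suc_shift) simp
    then show ?case using Suc by (simp add: mult.commute)
  qed
  show ?thesis unfolding a prod.distrib b c by simp
qed

lemma prod_high: "(\<Prod>i<n. q ^ n - q ^ (Suc (n + i))) = q ^ (n * n) * qpoch (q::'a::comm_ring_1) n"
proof -
  have a: "(\<Prod>i<n. q ^ n - q ^ (Suc (n + i))) = (\<Prod>i<n. q ^ n * (1 - q ^ Suc i))"
    by (rule prod.cong) (simp_all add: algebra_simps power_add)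
  have c: "(\<Prod>i<n. (1 - q ^ Suc i)) = qpoch q n" by (induction n) simp_all
  show ?thesis unfolding a prod.distrib c by (simp add: power_mult)
qed



lemma pderiv_sum: "pderiv (\<Sum>k\<in>S. f k :: 'a::idom poly) = (\<Sum>k\<in>S. pderiv (f k))"
  by (induction S rule: infinite_finite_induct) (simp_all add: pderiv_add)
lemma neg_pow_smult: "(- p) ^ k = smult ((-1) ^ k) (p ^ k :: 'a::idom poly)"
  by (induction k) simp_all

lemma term_smult: "[:a:] * (- [:0,1:]) ^ k = smult (a * (-1) ^ k) ([:0,1::'a::idom:] ^ k)"
  unfolding neg_pow_smult by (simp add: mult.commute)

lemma deriv_term: "poly (pderiv (smult c ([:0,1::'a::idom:] ^ k))) 1 = c * of_nat k"
  by (simp add: pderiv_smult pderiv_power pderiv_pCons)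

lemma fj: "[:a:] + (- [:0,1:]) * [:b:] ^ j = [:a, - (b ^ j) :: 'a::idom:]"
  by (simp add: poly_const_pow)

lemma D_raw:
  fixes n :: nat and Q :: "'a::idom"
  shows "- (Q ^ n) * ((-1) ^ n * Q ^ tri n * qpoch Q n) * (Q ^ (n * n) * qpoch Q n)
     = (\<Sum>k\<le>2*n+1. (-1) ^ k * of_nat k * Q ^ tri k * qbin Q (2*n+1) k * (Q ^ n) ^ (2*n+1-k))"
proof -
  define m where "m = 2*n+1"
  define f where "f j = [:Q ^ n, - (Q ^ j):]" for j
  have H: "(\<Prod>j<m. f j) = (\<Sum>k\<le>m. smult (((-1) ^ k * Q ^ tri k * qbin Q m k * (Q ^ n) ^ (m-k))) ([:0,1:] ^ k))"
  proof -
    have "(\<Prod>j<m. [:Q ^ n:] + (- [:0,1:]) * [:Q:] ^ j) =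
      (\<Sum>k\<le>m. [:Q:] ^ tri k * qbin [:Q:] m k * (- [:0,1:]) ^ k * [:Q ^ n:] ^ (m - k))"
      by (rule qbin_thm)
    also have "\<dots> = (\<Sum>k\<le>m. smult (((-1) ^ k * Q ^ tri k * qbin Q m k * (Q ^ n) ^ (m-k))) ([:0,1:] ^ k))"
    proof (rule sum.cong)
      fix k
      have "[:Q:] ^ tri k * qbin [:Q:] m k * (- [:0,1:]) ^ k * [:Q ^ n:] ^ (m - k)
        = [:Q ^ tri k * qbin Q m k * (Q ^ n) ^ (m - k):] * (- [:0,1:]) ^ k"
        by (simp add: qbin_const poly_const_pow mult_ac)
      also have "\<dots> = smult (((-1) ^ k * Q ^ tri k * qbin Q m k * (Q ^ n) ^ (m-k))) ([:0,1:] ^ k)"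
        unfolding term_smult by (simp add: mult_ac)
      finally show "[:Q:] ^ tri k * qbin [:Q:] m k * (- [:0,1:]) ^ k * [:Q ^ n:] ^ (m - k) = \<dots>" .
    qed simp
    finally show ?thesis unfolding f_def fj .
  qed
  have split: "(\<Prod>j<m. f j) = f n * ((\<Prod>j<n. f j) * (\<Prod>i<n. f (n + Suc i)))"
  proof -
    have "m = n + Suc n" unfolding m_def by simp
    then have "(\<Prod>j<m. f j) = (\<Prod>j<n. f j) * (\<Prod>i<Suc n. f (n + i))"
      using prod_lessThan_add by metis
    also have "(\<Prod>i<Suc n. f (n + i)) = f n * (\<Prod>i<n. f (n + Suc i))"
      by (subst prod.lessThan_Suc_shift) simp
    finally show ?thesis by (simp add: mult_ac)
  qed
  have pf: "poly (f j) 1 = Q ^ n - Q ^ j" for j by (simp add: f_def)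
  have pdf: "poly (pderiv (f j)) 1 = - (Q ^ j)" for j by (simp add: f_def pderiv_pCons)
  have "poly (pderiv (\<Prod>j<m. f j)) 1 = (\<Prod>j<n. Q ^ n - Q ^ j) * (\<Prod>i<n. Q ^ n - Q ^ Suc (n + i)) * (- (Q ^ n))"
    unfolding split pderiv_mult by (simp add: pf pdf poly_prod)
  also have "\<dots> = - (Q ^ n) * ((-1) ^ n * Q ^ tri n * qpoch Q n) * (Q ^ (n * n) * qpoch Q n)"
    unfolding prod_low prod_high by (simp add: mult_ac)
  finally have L: "poly (pderiv (\<Prod>j<m. f j)) 1 = - (Q ^ n) * ((-1) ^ n * Q ^ tri n * qpoch Q n) * (Q ^ (n * n) * qpoch Q n)" .
  have R: "poly (pderiv (\<Prod>j<m. f j)) 1 = (\<Sum>k\<le>m. (-1) ^ k * of_nat k * Q ^ tri k * qbin Q m k * (Q ^ n) ^ (m-k))"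
    unfolding H pderiv_sum poly_sum deriv_term by (simp add: mult_ac)
  show ?thesis using L R unfolding m_def by simp
qed



definition eqm :: "nat \<Rightarrow> 'a::comm_ring_1 fps \<Rightarrow> 'a fps \<Rightarrow> bool" where
  "eqm N f g \<longleftrightarrow> (\<forall>i<N. f $ i = g $ i)"

lemma eqm_refl [simp]: "eqm N f f" by (simp add: eqm_def)
lemma eqm_sym: "eqm N f g \<Longrightarrow> eqm N g f" by (simp add: eqm_def)
lemma eqm_trans: "eqm N f g \<Longrightarrow> eqm N g h \<Longrightarrow> eqm N f h" by (simp add: eqm_def)
lemma eqm_mono: "eqm N f g \<Longrightarrow> M \<le> N \<Longrightarrow> eqm M f g" by (simp add: eqm_def)
lemma eqm_eq: "f = g \<Longrightarrow> eqm N f g" by simp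
lemma eqm_add: "eqm N f g \<Longrightarrow> eqm N f' g' \<Longrightarrow> eqm N (f + f') (g + g')" by (simp add: eqm_def)

lemma eqm_mult: assumes "eqm N f g" "eqm N f' g'" shows "eqm N (f * f') (g * g')"
  unfolding eqm_def fps_mult_nth
proof (intro allI impI)
  fix i assume "i < N"
  then show "(\<Sum>j = 0..i. f $ j * f' $ (i - j)) = (\<Sum>j = 0..i. g $ j * g' $ (i - j))"
    using assms by (intro sum.cong) (auto simp: eqm_def)
qed

lemma eqm_sum: "(\<And>k. k \<in> S \<Longrightarrow> eqm N (f k) (g k)) \<Longrightarrow> eqm N (\<Sum>k\<in>S. f k) (\<Sum>k\<in>S. g k)"
  by (induction S rule: infinite_finite_induct) (auto intro: eqm_add)

lemma eqm_shift: assumes "eqm M f g" "N \<le> M + e" shows "eqm N (fps_X ^ e * f) (fps_X ^ e * g)"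
  using assms unfolding eqm_def fps_X_power_mult_nth by auto

lemma eqm_cancel:
  fixes f g h :: "'a::field fps"
  assumes "eqm N (f * h) (g * h)" "h $ 0 \<noteq> 0" shows "eqm N f g"
proof -
  have "eqm N (f * h * inverse h) (g * h * inverse h)" using assms(1) by (rule eqm_mult) simp
  moreover have "h * inverse h = 1" using assms(2) by (rule inverse_mult_eq_1')
  ultimately show ?thesis by (simp add: mult.assoc)
qed

lemma qpoch_0th: "qpoch (fps_X :: 'a::comm_ring_1 fps) n $ 0 = 1"
  by (induction n) (simp_all add: fps_mult_nth)

lemma one_minus_X_eqm: "N \<le> Suc k \<Longrightarrow> eqm N (1 - fps_X ^ Suc k :: 'a::comm_ring_1 fps) 1"
  unfolding eqm_def by auto

lemma qpoch_eqm: "n \<le> k \<Longrightarrow> eqm (Suc n) (qpoch (fps_X :: 'a::comm_ring_1 fps) k) (qpoch fps_X n)"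
proof (induction k rule: dec_induct)
  case base then show ?case by simp
next
  case (step k)
  have "eqm (Suc n) (qpoch fps_X k * (1 - fps_X ^ Suc k)) (qpoch fps_X n * (1 :: 'a fps))"
    using step by (intro eqm_mult one_minus_X_eqm) auto
  then show ?case by simp
qed

lemma key_eqm:
  fixes B :: "'a::field fps"
  assumes "B * qpoch fps_X a * qpoch fps_X b = qpoch fps_X m" "n \<le> a" "b \<le> n" "b \<le> m"
  shows "eqm (Suc b) (B * qpoch fps_X n) 1"
proof -
  have "eqm (Suc b) (B * qpoch fps_X n * qpoch fps_X b) (B * qpoch fps_X a * qpoch fps_X b)"
    by (intro eqm_mult eqm_refl eqm_mono[OF eqm_sym[OF qpoch_eqm[OF assms(2)]]]) (use assms in simp)
  also have "B * qpoch fps_X a * qpoch fps_X b = qpoch fps_X m" by fact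
  finally have "eqm (Suc b) (B * qpoch fps_X n * qpoch fps_X b) (1 * qpoch fps_X b)"
    using qpoch_eqm[OF assms(4)] by (auto intro: eqm_trans)
  then show ?thesis by (rule eqm_cancel) (simp add: qpoch_0th)
qed

definition U :: "nat \<Rightarrow> nat \<Rightarrow> nat" where
  "U n k = (if n < k then tri (k - n) else tri (n + 1 - k))"

lemma exp_lemma: "k \<le> 2*n+1 \<Longrightarrow> tri k + n * (2*n+1-k) = n + tri n + n*n + U n k"
proof (cases "n < k")
  case True
  assume k: "k \<le> 2*n+1"
  obtain l where "k = Suc (n + l)" using less_imp_Suc_add[OF True] by blast
  then have l: "k = n + Suc l" by simp
  have t: "tri k = tri n + tri (Suc l) + n * Suc l" unfolding l by (rule tri_add)
  have "l \<le> n" using k l by simp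
  then obtain d where d: "n = l + d" using le_Suc_ex by blast
  have e: "2*n+1-k = d" using l d by simp
  have u: "U n k = tri (Suc l)" unfolding U_def using True l by simp
  have m: "n * Suc l + n * d = n + n * n"
  proof -
    have "Suc l + d = Suc n" using d by simp
    then have "n * (Suc l + d) = n * Suc n" by simp
    then show ?thesis by (simp only: distrib_left mult_Suc_right)
  qed
  show ?thesis unfolding e u using t m by linarith
next
  case False
  assume k: "k \<le> 2*n+1"
  have "k \<le> n" using False by simp
  then obtain i where i: "n = k + i" using le_Suc_ex by blast
  have sn: "Suc n = k + Suc i" using i by simp
  have t1: "tri (Suc n) = tri k + tri (Suc i) + k * Suc i" unfolding sn by (rule tri_add)
  have t2: "tri (Suc n) = tri n + n" by simp
  have t3: "2 * tri (Suc i) + Suc i = Suc i * Suc i" by (rule tri_double)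
  have t3': "2 * tri (Suc i) = i * Suc i" using t3 by simp
  have u: "U n k = tri (Suc i)" unfolding U_def using False i by (simp add: Suc_diff_le)
  have e: "2*n+1-k = n + Suc i" using i by simp
  have m1: "n * (n + Suc i) = n * n + n * Suc i" by (simp only: distrib_left)
  have m2: "n * Suc i = k * Suc i + i * Suc i" unfolding i by (simp only: distrib_right)
  show ?thesis unfolding u e using t1 t2 t3' m1 m2 by linarith
qed



lemma S_eq: "(\<Sum>k\<le>2*n+1. (-1) ^ k * of_nat k * fps_X ^ (U n k) * qbin fps_X (2*n+1) k)
   = - ((-1) ^ n) * qpoch (fps_X :: rat fps) n ^ 2"
proof -
  let ?E = "n + tri n + n * n"
  let ?X = "fps_X :: rat fps"
  have D: "- (?X ^ n) * ((-1) ^ n * ?X ^ tri n * qpoch ?X n) * (?X ^ (n * n) * qpoch ?X n)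
     = (\<Sum>k\<le>2*n+1. (-1) ^ k * of_nat k * ?X ^ tri k * qbin ?X (2*n+1) k * (?X ^ n) ^ (2*n+1-k))"
    by (rule D_raw)
  have R: "(\<Sum>k\<le>2*n+1. (-1) ^ k * of_nat k * ?X ^ tri k * qbin ?X (2*n+1) k * (?X ^ n) ^ (2*n+1-k))
    = ?X ^ ?E * (\<Sum>k\<le>2*n+1. (-1) ^ k * of_nat k * ?X ^ (U n k) * qbin ?X (2*n+1) k)"
    unfolding sum_distrib_left
  proof (rule sum.cong)
    fix k assume "k \<in> {..2*n+1}"
    then have e: "tri k + n * (2*n+1-k) = ?E + U n k" using exp_lemma by simp
    have "?X ^ tri k * (?X ^ n) ^ (2*n+1-k) = ?X ^ ?E * ?X ^ (U n k)"
      by (simp only: power_mult[symmetric] power_add[symmetric] e)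
    moreover have "(-1) ^ k * of_nat k * ?X ^ tri k * qbin ?X (2*n+1) k * (?X ^ n) ^ (2*n+1-k)
      = ((-1) ^ k * of_nat k * qbin ?X (2*n+1) k) * (?X ^ tri k * (?X ^ n) ^ (2*n+1-k))"
      by (simp only: mult_ac)
    moreover have "?X ^ ?E * ((-1) ^ k * of_nat k * ?X ^ (U n k) * qbin ?X (2*n+1) k)
      = ((-1) ^ k * of_nat k * qbin ?X (2*n+1) k) * (?X ^ ?E * ?X ^ (U n k))"
      by (simp only: mult_ac)
    ultimately show "(-1) ^ k * of_nat k * ?X ^ tri k * qbin ?X (2*n+1) k * (?X ^ n) ^ (2*n+1-k)
      = ?X ^ ?E * ((-1) ^ k * of_nat k * ?X ^ (U n k) * qbin ?X (2*n+1) k)"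
      by simp
  qed simp
  have L: "- (?X ^ n) * ((-1) ^ n * ?X ^ tri n * qpoch ?X n) * (?X ^ (n * n) * qpoch ?X n)
      = ?X ^ ?E * (- ((-1) ^ n) * qpoch ?X n ^ 2)"
    by (simp add: power_add power2_eq_square mult_ac)
  have nz: "?X ^ ?E \<noteq> 0" by simp
  have "?X ^ ?E * (\<Sum>k\<le>2*n+1. (-1) ^ k * of_nat k * ?X ^ (U n k) * qbin ?X (2*n+1) k)
      = ?X ^ ?E * (- ((-1) ^ n) * qpoch ?X n ^ 2)"
    by (simp only: R[symmetric] D[symmetric] L)
  then show ?thesis using nz mult_left_cancel by blast
qed

definition J :: "nat \<Rightarrow> rat fps" where
  "J n = (\<Sum>l<Suc n. fps_const ((-1) ^ l * of_nat (2*l+1)) * fps_X ^ tri (Suc l))"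

lemma const_conv: "fps_const ((-1) ^ l * of_nat m :: rat) = (-1) ^ l * of_nat m"
  by (simp only: fps_const_mult[symmetric] fps_const_power[symmetric] fps_const_neg[symmetric] fps_const_1_eq_1 fps_of_nat)

lemma WJ: "(\<Sum>k\<le>2*n+1. (-1) ^ k * of_nat k * (fps_X :: rat fps) ^ (U n k)) = - ((-1) ^ n) * J n"
proof -
  define w where "w k = (-1) ^ k * of_nat k * (fps_X :: rat fps) ^ (U n k)" for k
  have s: "{..2*n+1} = {..<Suc n + Suc n}" by auto
  have "(\<Sum>k\<le>2*n+1. w k) = (\<Sum>k<Suc n. w k) + (\<Sum>i<Suc n. w (Suc n + i))"
    unfolding s by (rule sum_lessThan_add)
  also have "(\<Sum>k<Suc n. w k) = (\<Sum>i<Suc n. w (Suc n - Suc i))"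
    by (rule sum.nat_diff_reindex[symmetric])
  also have "(\<Sum>i<Suc n. w (Suc n - Suc i)) + (\<Sum>i<Suc n. w (Suc n + i))
     = (\<Sum>i<Suc n. - ((-1) ^ n) * (fps_const ((-1) ^ i * of_nat (2*i+1)) * fps_X ^ tri (Suc i)))"
    unfolding sum.distrib[symmetric]
  proof (rule sum.cong)
    fix i assume "i \<in> {..<Suc n}"
    then obtain d where d: "n = i + d" by (metis lessThan_iff less_Suc_eq_le le_Suc_ex)
    have u1: "U n (Suc n - Suc i) = tri (Suc i)" unfolding U_def using d by simp
    have u2: "U n (Suc n + i) = tri (Suc i)" unfolding U_def using d by simp
    have p1: "(-1 :: rat fps) ^ (Suc n - Suc i) = (-1) ^ d" using d by simp
    have p2: "(-1 :: rat fps) ^ (Suc n + i) = - ((-1) ^ d)"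
    proof -
      have "Suc n + i = Suc (d + 2 * i)" using d by simp
      then show ?thesis by (simp add: power_add power_mult)
    qed
    have p3: "(-1 :: rat fps) ^ n * (-1) ^ i = (-1) ^ d"
    proof -
      have "n + i = d + 2 * i" using d by simp
      then have "(-1 :: rat fps) ^ (n + i) = (-1) ^ d" by (simp add: power_add power_mult)
      then show ?thesis by (simp add: power_add)
    qed
    have "w (Suc n - Suc i) + w (Suc n + i) = ((-1) ^ d * of_nat d - (-1) ^ d * of_nat (Suc n + i)) * fps_X ^ tri (Suc i)"
      unfolding w_def u1 u2 p1 p2 using d by (simp add: algebra_simps)
    also have "(-1) ^ d * of_nat d - (-1) ^ d * of_nat (Suc n + i) = - ((-1) ^ d) * (of_nat (2*i+1) :: rat fps)"
      using d by (simp add: algebra_simps)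
    also have "- ((-1) ^ d) * (of_nat (2*i+1) :: rat fps) = - ((-1) ^ n) * ((-1) ^ i * of_nat (2*i+1))"
      using p3 by (metis mult.assoc mult_minus_left)
    finally show "w (Suc n - Suc i) + w (Suc n + i) = - ((-1) ^ n) * (fps_const ((-1) ^ i * of_nat (2*i+1)) * fps_X ^ tri (Suc i))"
      unfolding const_conv by (simp only: mult.assoc)
  qed simp
  finally show ?thesis unfolding w_def J_def sum_distrib_left by simp
qed



lemma tri_formula: "tri j = j * (j - 1) div 2"
proof -
  have "2 * tri j + j = j * j" by (rule tri_double)
  then have "2 * tri j = j * (j - 1)" by (cases j) simp_all
  then show ?thesis by simp
qed

lemma tri_ge: "j \<le> Suc (tri j)"
  by (induction j) auto

lemma P0_J: "eqm (Suc n) P0 (J n)"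
  unfolding eqm_def
proof (intro allI impI)
  fix k assume k: "k < Suc n"
  define h where "h l = (if tri (Suc l) = k then (-1) ^ l * of_nat (2*l+1) else (0::rat))" for l
  have "P0 $ k = (\<Sum>j\<in>{1..k+1}. if j * (j - 1) div 2 = k then (-1) ^ (j - 1) * of_nat (2 * j - 1) else (0::rat))"
    unfolding P0_def fps_nth_Abs_fps ..
  also have "{1..k+1} = {Suc 0..Suc k}" by simp
  also have "(\<Sum>j\<in>{Suc 0..Suc k}. if j * (j - 1) div 2 = k then (-1) ^ (j - 1) * of_nat (2 * j - 1) else (0::rat))
     = (\<Sum>l\<in>{0..k}. h l)"
    unfolding sum.shift_bounds_cl_Suc_ivl
  proof (rule sum.cong)
    fix l
    have a: "Suc l * l div 2 = tri (Suc l)" by (simp only: tri_formula diff_Suc_1)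
    have b: "2 * Suc l - 1 = 2*l+1" by simp
    show "(if Suc l * (Suc l - 1) div 2 = k then (-1) ^ (Suc l - 1) * of_nat (2 * Suc l - 1) else (0::rat)) = h l"
      by (simp only: a b diff_Suc_1 h_def)
  qed simp
  also have "\<dots> = (\<Sum>l<Suc n. h l)"
  proof (rule sum.mono_neutral_left)
    show "{0..k} \<subseteq> {..<Suc n}" using k by auto
    show "\<forall>l\<in>{..<Suc n} - {0..k}. h l = 0"
    proof
      fix l assume "l \<in> {..<Suc n} - {0..k}"
      then have "k < l" by auto
      moreover have "l \<le> tri (Suc l)" by simp
      ultimately show "h l = 0" unfolding h_def by auto
    qed
  qed simp_all
  also have "\<dots> = J n $ k"
    unfolding J_def fps_sum_nth h_def by (rule sum.cong) auto
  finally show "P0 $ k = J n $ k" .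
qed

lemma term_eqm:
  assumes k: "k \<le> 2*n+1"
  shows "eqm (Suc n) (fps_X ^ (U n k) * (qbin fps_X (2*n+1) k * qpoch fps_X n)) ((fps_X :: rat fps) ^ (U n k) * 1)"
proof (cases "n < k")
  case True
  have f: "qbin fps_X (2*n+1) k * qpoch fps_X k * qpoch fps_X (2*n+1-k) = qpoch (fps_X :: rat fps) (2*n+1)"
    using qbin_fact k by blast
  have e: "eqm (Suc (2*n+1-k)) (qbin fps_X (2*n+1) k * qpoch fps_X n) (1 :: rat fps)"
    by (rule key_eqm[OF f]) (use True k in auto)
  have b: "Suc n \<le> U n k + Suc (2*n+1-k)"
    using True tri_ge[of "k - n"] unfolding U_def by simp
  show ?thesis by (rule eqm_shift[OF e]) (use b in simp)
next
  case False
  have f: "qbin fps_X (2*n+1) k * qpoch fps_X (2*n+1-k) * qpoch fps_X k = qpoch (fps_X :: rat fps) (2*n+1)"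
    using qbin_fact[OF k] by (simp add: mult_ac)
  have e: "eqm (Suc k) (qbin fps_X (2*n+1) k * qpoch fps_X n) (1 :: rat fps)"
    by (rule key_eqm[OF f]) (use False k in auto)
  have b: "Suc n \<le> U n k + Suc k"
    using False tri_ge[of "n + 1 - k"] unfolding U_def by simp
  show ?thesis by (rule eqm_shift[OF e]) (use b in simp)
qed

lemma jacobi_trunc: "eqm (Suc n) P0 (qpoch (fps_X :: rat fps) n ^ 3)"
proof -
  let ?X = "fps_X :: rat fps"
  let ?c = "- ((-1) ^ n) :: rat fps"
  have "eqm (Suc n) ((\<Sum>k\<le>2*n+1. (-1) ^ k * of_nat k * ?X ^ (U n k) * qbin ?X (2*n+1) k) * qpoch ?X n)
          (\<Sum>k\<le>2*n+1. (-1) ^ k * of_nat k * ?X ^ (U n k))"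
    unfolding sum_distrib_right
  proof (rule eqm_sum)
    fix k assume "k \<in> {..2*n+1}"
    then have "eqm (Suc n) ((-1) ^ k * of_nat k * (?X ^ (U n k) * (qbin ?X (2*n+1) k * qpoch ?X n)))
        ((-1) ^ k * of_nat k * (?X ^ (U n k) * 1))"
      by (intro eqm_mult eqm_refl term_eqm) simp
    then show "eqm (Suc n) ((-1) ^ k * of_nat k * ?X ^ (U n k) * qbin ?X (2*n+1) k * qpoch ?X n)
        ((-1) ^ k * of_nat k * ?X ^ (U n k))"
      by (simp add: mult_ac)
  qed
  then have "eqm (Suc n) (?c * qpoch ?X n ^ 2 * qpoch ?X n) (?c * J n)"
    unfolding S_eq WJ .
  then have e: "eqm (Suc n) (?c * (?c * qpoch ?X n ^ 2 * qpoch ?X n)) (?c * (?c * J n))"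
    by (rule eqm_mult[OF eqm_refl])
  have cc: "?c * ?c = 1" by (simp flip: power_mult_distrib)
  have cc2: "?c * (?c * Y) = Y" for Y :: "rat fps"
    by (simp only: mult.assoc[symmetric] cc mult_1_left)
  have p3: "?c * qpoch ?X n ^ 2 * qpoch ?X n = ?c * qpoch ?X n ^ 3"
    by (simp only: power2_eq_square power3_eq_cube mult.assoc)
  have "eqm (Suc n) (qpoch ?X n ^ 3) (J n)"
    using e unfolding p3 cc2 .
  then show ?thesis using P0_J by (metis eqm_sym eqm_trans)
qed



lemma XD_mult: "fps_XD (a * b) = fps_XD a * b + a * fps_XD (b :: rat fps)"
  by (simp add: fps_XD_def algebra_simps)

lemma XD_one_minus: "fps_XD (1 - fps_X ^ j) = - (fps_const (of_nat j) * fps_X ^ j :: rat fps)"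
  by (simp add: fps_eq_iff)

definition geo :: "nat \<Rightarrow> rat fps" where
  "geo i = Abs_fps (\<lambda>k. if i dvd k then 1 else 0)"

lemma geo_inv: assumes "0 < i" shows "(1 - fps_X ^ i) * geo i = 1"
proof (rule fps_ext)
  fix k
  show "((1 - fps_X ^ i) * geo i) $ k = 1 $ k"
  proof (cases "k < i")
    case True
    then show ?thesis using assms
      by (auto simp: algebra_simps fps_X_power_mult_nth geo_def dest: dvd_imp_le)
  next
    case False
    then have "i dvd (k - i) \<longleftrightarrow> i dvd k"
      by (metis dvd_add_left_iff dvd_refl le_add_diff_inverse2 not_less)
    then show ?thesis using False assms
      by (auto simp: algebra_simps fps_X_power_mult_nth geo_def)
  qed
qed

definition Bser :: "nat \<Rightarrow> rat fps" where
  "Bser N = (\<Sum>i\<in>{1..N}. fps_const (of_nat i) * (fps_X ^ i * geo i))"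

lemma XD_qpoch: "fps_XD (qpoch fps_X N) = - qpoch fps_X N * Bser N"
proof (induction N)
  case 0 then show ?case by (simp add: Bser_def fps_eq_iff)
next
  case (Suc N)
  let ?q = "qpoch (fps_X :: rat fps) N"
  let ?Y = "fps_X ^ Suc N :: rat fps"
  let ?c = "fps_const (of_nat (Suc N)) :: rat fps"
  have B: "Bser (Suc N) = Bser N + ?c * (?Y * geo (Suc N))"
    unfolding Bser_def by simp
  have g: "(1 - ?Y) * geo (Suc N) = 1" by (rule geo_inv) simp
  have "fps_XD (qpoch fps_X (Suc N)) = fps_XD ?q * (1 - ?Y) + ?q * fps_XD (1 - ?Y)"
    by (simp add: XD_mult)
  also have "\<dots> = - ?q * Bser N * (1 - ?Y) - ?q * ?c * ?Y"
    unfolding Suc XD_one_minus by (simp add: algebra_simps)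
  also have "\<dots> = - ?q * Bser N * (1 - ?Y) - ?q * ?c * ?Y * ((1 - ?Y) * geo (Suc N))"
    unfolding g by simp
  also have "\<dots> = - (?q * (1 - ?Y)) * Bser (Suc N)"
    unfolding B by (simp add: algebra_simps)
  finally show ?case by simp
qed

lemma XD_cube: "fps_XD (qpoch fps_X N ^ 3) = - 3 * qpoch fps_X N ^ 3 * Bser N"
proof -
  let ?q = "qpoch (fps_X :: rat fps) N"
  have "fps_XD (?q ^ 3) = fps_XD (?q * ?q * ?q)" by (simp add: power3_eq_cube)
  also have "\<dots> = 3 * (?q * ?q) * fps_XD ?q" by (simp add: XD_mult algebra_simps)
  finally show ?thesis unfolding XD_qpoch by (simp add: power3_eq_cube algebra_simps)
qed

lemma Bser_eqm: "eqm (Suc N) (Bser N) (A 0)"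
  unfolding eqm_def
proof (intro allI impI)
  fix k assume k: "k < Suc N"
  have c: "(fps_const (of_nat i) * (fps_X ^ i * geo i)) $ k = (if i dvd k \<and> 0 < k then of_nat i else 0)"
    if i: "i \<in> {1..N}" for i
  proof -
    have "(fps_X ^ i * geo i) $ k = (if i dvd k \<and> 0 < k then 1 else (0::rat))"
    proof (cases "k < i")
      case True then show ?thesis using i by (auto simp: fps_X_power_mult_nth dest: dvd_imp_le)
    next
      case False
      then have "i dvd (k - i) \<longleftrightarrow> i dvd k"
        by (metis dvd_add_left_iff dvd_refl le_add_diff_inverse2 not_less)
      then show ?thesis using False i by (auto simp: fps_X_power_mult_nth geo_def)
    qed
    then show ?thesis by simp
  qed
  have "Bser N $ k = (\<Sum>i\<in>{1..N}. if i dvd k \<and> 0 < k then of_nat i else 0)"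
    unfolding Bser_def fps_sum_nth by (rule sum.cong[OF refl c])
  also have "\<dots> = A 0 $ k"
  proof (cases "k = 0")
    case True then show ?thesis by (simp add: A_def)
  next
    case False
    have "(\<Sum>i\<in>{1..N}. if i dvd k \<and> 0 < k then of_nat i else (0::rat)) = (\<Sum>i\<in>{d. d dvd k}. of_nat i)"
    proof (rule sum.mono_neutral_cong_right)
      show "{d. d dvd k} \<subseteq> {1..N}"
      proof
        fix d assume "d \<in> {d. d dvd k}"
        then have d: "d dvd k" by simp
        have "d \<le> k" using d False by (simp add: dvd_imp_le)
        moreover have "d \<noteq> 0" using d False by auto
        ultimately show "d \<in> {1..N}" using k by simp
      qed
    qed (use False in auto)
    then show ?thesis using False by (simp add: A_def sigma_def)
  qed
  finally show "Bser N $ k = A 0 $ k" .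
qed

lemma Theta_P0: "fps_XD P0 = - 3 * P0 * A 0"
proof (rule fps_ext)
  fix k
  let ?E = "qpoch (fps_X :: rat fps) k ^ 3"
  have j: "eqm (Suc k) P0 ?E" by (rule jacobi_trunc)
  have "eqm (Suc k) (- 3 * ?E * Bser k) (- 3 * P0 * A 0)"
    by (intro eqm_mult eqm_refl Bser_eqm eqm_sym[OF j])
  then have e: "(- 3 * ?E * Bser k) $ k = (- 3 * P0 * A 0) $ k" by (simp add: eqm_def)
  have "fps_XD P0 $ k = of_nat k * ?E $ k" using j by (simp add: eqm_def)
  also have "\<dots> = fps_XD ?E $ k" by simp
  also have "\<dots> = (- 3 * P0 * A 0) $ k" unfolding XD_cube e ..
  finally show "fps_XD P0 $ k = (- 3 * P0 * A 0) $ k" .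
qed



lemma XD_A: "fps_XD (A i) = A (Suc i)"
  by (simp add: fps_eq_iff A_def)

lemma poly_in_A_mono: "f \<in> poly_in_A m \<Longrightarrow> m \<le> m' \<Longrightarrow> f \<in> poly_in_A m'"
  by (induction rule: poly_in_A.induct) (auto intro: poly_in_A.intros)

lemma poly_in_A_diff: "f \<in> poly_in_A m \<Longrightarrow> g \<in> poly_in_A m \<Longrightarrow> f - g \<in> poly_in_A m"
proof -
  assume f: "f \<in> poly_in_A m" and g: "g \<in> poly_in_A m"
  have "fps_const (-1) * g \<in> poly_in_A m" by (intro poly_in_A.mult poly_in_A.const g)
  then have "f + fps_const (-1) * g \<in> poly_in_A m" by (intro poly_in_A.add f)
  moreover have "f + fps_const (-1) * g = f - g" by (simp add: fps_const_neg[symmetric] del: fps_const_neg)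
  ultimately show ?thesis by simp
qed

lemma XD_poly: "f \<in> poly_in_A m \<Longrightarrow> fps_XD f \<in> poly_in_A (Suc m)"
proof (induction rule: poly_in_A.induct)
  case (const c)
  have "fps_XD (fps_const c) = fps_const 0" by (simp add: fps_eq_iff)
  then show ?case by (metis poly_in_A.const)
next
  case (gen i)
  then show ?case by (simp add: XD_A poly_in_A.gen)
next
  case (add f g)
  then show ?case by (simp add: poly_in_A.add)
next
  case (mult f g)
  have f: "f \<in> poly_in_A (Suc m)" "g \<in> poly_in_A (Suc m)"
    using mult.hyps by (auto intro: poly_in_A_mono)
  show ?case unfolding XD_mult using mult.IH f by (intro poly_in_A.add poly_in_A.mult)
qed

fun Pm :: "nat \<Rightarrow> rat fps" where
  "Pm 0 = 0"
| "Pm (Suc 0) = A 0"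
| "Pm (Suc (Suc m)) = fps_XD (Pm (Suc m)) - 3 * A 0 * Pm (Suc m)"

lemma XD_neg3: "fps_XD (- 3 * f) = - 3 * fps_XD (f :: rat fps)"
  by (simp add: fps_eq_iff neg_numeral_fps_const)

theorem lemma3p1:
  shows "\<exists>P :: nat \<Rightarrow> rat fps.
     P 1 = A 0 \<and>
     (\<forall>m\<ge>1. P (m + 1) = Theta (P m) - 3 * A 0 * P m) \<and>
     (\<forall>m\<ge>1. (Theta ^^ m) P0 = - 3 * P0 * P m \<and> P m \<in> poly_in_A m)"
proof (intro exI conjI allI impI)
  show "Pm 1 = A 0" by simp
next
  fix m :: nat assume "1 \<le> m"
  then obtain m' where "m = Suc m'" by (cases m) auto
  then show "Pm (m + 1) = fps_XD (Pm m) - 3 * A 0 * Pm m" by simp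
next
  fix m :: nat assume m: "1 \<le> m"
  have "(fps_XD ^^ m) P0 = - 3 * P0 * Pm m \<and> Pm m \<in> poly_in_A m"
    using m
  proof (induction m rule: dec_induct)
    case base
    show ?case using Theta_P0 by (simp add: poly_in_A.gen)
  next
    case (step m)
    then obtain m' where m': "m = Suc m'" by (cases m) auto
    have r: "Pm (Suc m) = fps_XD (Pm m) - 3 * A 0 * Pm m" using m' by simp
    have "(fps_XD ^^ Suc m) P0 = fps_XD (- 3 * P0 * Pm m)" using step.IH by simp
    also have "\<dots> = - 3 * fps_XD (P0 * Pm m)"
      by (simp only: mult.assoc XD_neg3)
    also have "\<dots> = - 3 * (fps_XD P0 * Pm m + P0 * fps_XD (Pm m))"
      by (simp only: XD_mult)
    also have "\<dots> = - 3 * P0 * Pm (Suc m)" unfolding r Theta_P0 by (simp add: algebra_simps)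
    finally have 1: "(fps_XD ^^ Suc m) P0 = - 3 * P0 * Pm (Suc m)" .
    have a: "A 0 \<in> poly_in_A (Suc m)" using step by (intro poly_in_A.gen) simp
    have "fps_const 3 \<in> poly_in_A (Suc m)" by (rule poly_in_A.const)
    then have t: "3 \<in> poly_in_A (Suc m)" by (simp add: numeral_fps_const)
    have p: "Pm m \<in> poly_in_A (Suc m)" using step.IH by (auto intro: poly_in_A_mono)
    have 2: "Pm (Suc m) \<in> poly_in_A (Suc m)"
      unfolding r using XD_poly[of "Pm m" m] step.IH a t p
      by (intro poly_in_A_diff poly_in_A.mult) auto
    show ?case using 1 2 by simp
  qed
  then show "(fps_XD ^^ m) P0 = - 3 * P0 * Pm m" "Pm m \<in> poly_in_A m" by simp_all
qed


end
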